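(* Let $\mathbf X=(X_1,\dots,X_d)$ be a centered Gaussian random vector with non-singular covariance matrix $\Sigma$, let $\mathbf c\in\mathbb R^d$ have at least one positive component, and let $I$ be the index set associated with $\Pi_\Sigma(\mathbf c)$. If $1\in I$, then with $M(\mathbf c,u)=\mathbb E[X_1\mid\mathbf X>\mathbf cu]$, $$\lim_{u\to\infty}u\,[M(\mathbf c,u)-c_1u]=\frac{1}{\mathbf c_I^\top(\Sigma_{II})^{-1}\mathbf e_1}>0.$$
   Context: Vector inequalities are componentwise; $\Sigma_{II}$ and $\mathbf c_I$ denote the submatrix and subvector with indices in $I$. $\Pi_\Sigma(\mathbf c)$ is the problem of minimising $\mathbf x^\top\Sigma^{-1}\mathbf x$ over $\mathbf x\ge\mathbf c$; it has a unique solution $\tilde{\mathbf c}$ and $I$ is the unique non-empty index set with $\tilde{\mathbf c}_I=\mathbf c_I$, $(\Sigma_{II})^{-1}\mathbf c_I>\mathbf 0$ and $\tilde{\mathbf c}_{I^c}=\Sigma_{I^cI}(\Sigma_{II})^{-1}\mathbf c_I\ge\mathbf c_{I^c}$. $\mathbf e_1\in\mathbb R^{|I|}$ is the unit vector with $1$ in the position of index $1$ within $I$. *)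

theory Defs
  imports "HOL-Probability.Probability"
begin

definition gauss_density :: "real^'d^'d \<Rightarrow> real^'d \<Rightarrow> ennreal" where
  "gauss_density S x =
     ennreal (exp (- (x \<bullet> (matrix_inv S *v x)) / 2) / sqrt ((2 * pi) ^ CARD('d) * det S))"

text \<open>Inverse of the principal submatrix S_II, embedded into a 'd x 'd matrix
  (entries outside I x I are zero).\<close>
definition sub_inv :: "real^'d^'d \<Rightarrow> 'd set \<Rightarrow> real^'d^'d" where
  "sub_inv S I = (THE B.
      (\<forall>i j. (i \<notin> I \<or> j \<notin> I) \<longrightarrow> B $ i $ j = 0) \<and>
      (\<forall>i\<in>I. \<forall>j\<in>I. (\<Sum>k\<in>I. S $ i $ k * B $ k $ j) = (if i = j then 1 else 0)))"

definition Pi_solution :: "real^'d^'d \<Rightarrow> real^'d \<Rightarrow> real^'d \<Rightarrow> bool" where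
  "Pi_solution S c ct \<longleftrightarrow> (\<forall>i. c $ i \<le> ct $ i) \<and>
     (\<forall>x. (\<forall>i. c $ i \<le> x $ i) \<longrightarrow> ct \<bullet> (matrix_inv S *v ct) \<le> x \<bullet> (matrix_inv S *v x))"

definition assoc_index_set :: "real^'d^'d \<Rightarrow> real^'d \<Rightarrow> 'd set \<Rightarrow> bool" where
  "assoc_index_set S c I \<longleftrightarrow> I \<noteq> {} \<and>
     (\<exists>ct. Pi_solution S c ct \<and>
        (\<forall>i\<in>I. ct $ i = c $ i) \<and>
        (\<forall>i\<in>I. (\<Sum>j\<in>I. sub_inv S I $ i $ j * c $ j) > 0) \<and>
        (\<forall>j. j \<notin> I \<longrightarrow>
            ct $ j = (\<Sum>i\<in>I. S $ j $ i * (\<Sum>l\<in>I. sub_inv S I $ i $ l * c $ l)) \<and>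
            ct $ j \<ge> c $ j))"

definition cond_mean :: "'a measure \<Rightarrow> ('a \<Rightarrow> real^'d) \<Rightarrow> 'd \<Rightarrow> real^'d \<Rightarrow> real \<Rightarrow> real" where
  "cond_mean M X k c u =
     (let A = {\<omega> \<in> space M. \<forall>i. X \<omega> $ i > c $ i * u}
      in (\<integral>\<omega>. X \<omega> $ k * indicator A \<omega> \<partial>M) / measure M A)"

end

theory Submission
  imports Defs
begin

lemma minv:
  fixes A :: "real^'n^'n"
  assumes "invertible A"
  shows "A ** matrix_inv A = mat 1" "matrix_inv A ** A = mat 1"
proof -
  have "\<exists>A'. A ** A' = mat 1 \<and> A' ** A = mat 1" using assms unfolding invertible_def by blast
  from someI_ex[OF this] show "A ** matrix_inv A = mat 1" "matrix_inv A ** A = mat 1"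
    unfolding matrix_inv_def by auto
qed

lemma minv_sym:
  fixes A :: "real^'n^'n"
  assumes "invertible A" "transpose A = A"
  shows "transpose (matrix_inv A) = matrix_inv A"
proof -
  let ?B = "matrix_inv A"
  have "transpose ?B ** A = mat 1"
    using arg_cong[OF minv(1)[OF assms(1)], of transpose] assms(2)
    by (simp add: matrix_transpose_mul transpose_mat)
  then have "transpose ?B = transpose ?B ** (A ** ?B)"
    using minv[OF assms(1)] by (simp add: matrix_mul_rid)
  also have "\<dots> = ?B" using \<open>transpose ?B ** A = mat 1\<close>
    by (simp add: matrix_mul_assoc matrix_mul_lid)
  finally show ?thesis .
qed

lemma dot_sym:
  fixes A :: "real^'n^'n"
  assumes "transpose A = A"
  shows "x \<bullet> (A *v y) = y \<bullet> (A *v x)"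
proof -
  have "x \<bullet> (A *v y) = (\<Sum>i\<in>UNIV. \<Sum>j\<in>UNIV. x$i * A$i$j * y$j)"
    by (simp add: inner_vec_def matrix_vector_mult_def sum_distrib_left mult.assoc)
  also have "\<dots> = (\<Sum>j\<in>UNIV. \<Sum>i\<in>UNIV. y$j * A$j$i * x$i)"
  proof -
    have symc: "A$i$j = A$j$i" for i j
      using arg_cong[OF assms, of "\<lambda>B. B$j$i"] by (simp add: transpose_def)
    show ?thesis
      apply (subst sum.swap)
      by (intro sum.cong refl) (simp add: symc mult.commute mult.left_commute)
  qed
  also have "\<dots> = y \<bullet> (A *v x)"
    by (simp add: inner_vec_def matrix_vector_mult_def sum_distrib_left mult.assoc)
  finally show ?thesis .
qed

lemma psd_zero:
  fixes A :: "real^'n^'n"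
  assumes sym: "transpose A = A" and psd: "\<forall>x. 0 \<le> x \<bullet> (A *v x)"
    and z: "v \<bullet> (A *v v) = 0"
  shows "A *v v = 0"
proof (rule ccontr)
  let ?w = "A *v v"
  assume "?w \<noteq> 0"
  then have wpos: "?w \<bullet> ?w > 0" by simp
  define t where "t = (?w \<bullet> ?w) / (?w \<bullet> (A *v ?w) + 1)"
  have wAw: "?w \<bullet> (A *v ?w) \<ge> 0" using psd by blast
  have tpos: "t > 0" unfolding t_def using wpos wAw by auto
  have "(v - t *\<^sub>R ?w) \<bullet> (A *v (v - t *\<^sub>R ?w)) =
     v \<bullet> (A *v v) - 2 * t * (?w \<bullet> ?w) + t^2 * (?w \<bullet> (A *v ?w))"
    using dot_sym[OF sym, of v ?w]
    by (simp add: matrix_vector_mult_diff_distrib matrix_vector_mult_scaleR inner_diff_left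
        inner_diff_right algebra_simps power2_eq_square)
  also have "\<dots> = - 2 * t * (?w \<bullet> ?w) + t * (t * (?w \<bullet> (A *v ?w)))"
    using z by (simp add: power2_eq_square)
  also have "t * (?w \<bullet> (A *v ?w)) \<le> ?w \<bullet> ?w"
    unfolding t_def using wpos wAw by (simp add: field_simps)
  then have "- 2 * t * (?w \<bullet> ?w) + t * (t * (?w \<bullet> (A *v ?w))) \<le> - t * (?w \<bullet> ?w)"
    using tpos by (simp add: mult_left_mono)
  also have "\<dots> < 0" using tpos wpos by simp
  finally show False using psd by (meson not_le)
qed

lemma pd_pos:
  fixes A :: "real^'n^'n"
  assumes sym: "transpose A = A" and psd: "\<forall>x. 0 \<le> x \<bullet> (A *v x)"
    and inv: "invertible A" and "v \<noteq> 0"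
  shows "v \<bullet> (A *v v) > 0"
proof -
  have "v \<bullet> (A *v v) \<noteq> 0"
  proof
    assume "v \<bullet> (A *v v) = 0"
    then have "A *v v = 0" using psd_zero[OF sym psd] by blast
    then have "matrix_inv A *v (A *v v) = 0" by simp
    then have "v = 0" using minv(2)[OF inv] by (simp add: matrix_vector_mul_assoc)
    with assms show False by simp
  qed
  with psd[rule_format, of v] show ?thesis by linarith
qed

lemma pd_inj:
  fixes A :: "real^'n^'n"
  assumes sym: "transpose A = A" and psd: "\<forall>x. 0 \<le> x \<bullet> (A *v x)"
    and inv: "invertible A" and "A *v v = 0"
  shows "v = 0"
  using pd_pos[OF sym psd inv, of v] assms(4) by (cases "v = 0") auto

lemma sub_inv_props:
  fixes S :: "real^'n^'n"
  assumes sym: "transpose S = S" and psd: "\<forall>x. 0 \<le> x \<bullet> (S *v x)" and inv: "invertible S"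
  shows "\<forall>i\<in>I. \<forall>j\<in>I. (\<Sum>k\<in>I. S$i$k * sub_inv S I $k$j) = (if i=j then 1 else 0)"
    and "\<forall>i\<in>I. \<forall>j\<in>I. sub_inv S I $i$j = sub_inv S I $j$i"
proof -
  define S' :: "real^'n^'n" where
    "S' = (\<chi> i j. if i\<in>I \<and> j\<in>I then S$i$j else if i=j then 1 else 0)"
  have symc: "S$i$j = S$j$i" for i j
    using arg_cong[OF sym, of "\<lambda>B. B$j$i"] by (simp add: transpose_def)
  have S'sym: "transpose S' = S'"
    by (simp add: S'_def transpose_def vec_eq_iff symc)
  have S'ker: "\<forall>v. S' *v v = 0 \<longrightarrow> v = 0"
  proof (intro allI impI)
    fix v assume z: "S' *v v = 0"
    have comp: "(S' *v v)$i = (\<Sum>j\<in>UNIV. S'$i$j * v$j)" for i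
      by (simp add: matrix_vector_mult_def)
    have off: "v$i = 0" if "i \<notin> I" for i
    proof -
      have "(\<Sum>j\<in>UNIV. S'$i$j * v$j) = (\<Sum>j\<in>UNIV. (if j = i then v$j else 0))"
        using that by (intro sum.cong) (auto simp: S'_def)
      then show ?thesis using z comp[of i] by simp
    qed
    have onI: "(S *v v)$i = 0" if "i \<in> I" for i
    proof -
      have "(S *v v)$i = (\<Sum>j\<in>UNIV. S$i$j * v$j)" by (simp add: matrix_vector_mult_def)
      also have "\<dots> = (\<Sum>j\<in>UNIV. S'$i$j * v$j)"
        using that off by (intro sum.cong) (auto simp: S'_def)
      finally show ?thesis using z comp[of i] by simp
    qed
    have "v \<bullet> (S *v v) = 0"
      unfolding inner_vec_def using off onI
      by (intro sum.neutral) (metis inner_real_def mult_zero_left mult_zero_right)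
    then have "S *v v = 0" using psd_zero[OF sym psd] by blast
    then show "v = 0" using pd_inj[OF sym psd inv] by blast
  qed
  have S'inv: "invertible S'"
    using S'ker invertible_left_inverse matrix_left_invertible_ker by blast
  define B' where "B' = matrix_inv S'"
  have SB': "S' ** B' = mat 1" unfolding B'_def by (rule minv(1)[OF S'inv])
  have B'sym: "B'$i$j = B'$j$i" for i j
    using arg_cong[OF minv_sym[OF S'inv S'sym], of "\<lambda>B. B$j$i"] by (simp add: transpose_def B'_def)
  define B0 :: "real^'n^'n" where "B0 = (\<chi> i j. if i\<in>I \<and> j\<in>I then B'$i$j else 0)"
  have B0spec: "(\<forall>i j. (i \<notin> I \<or> j \<notin> I) \<longrightarrow> B0 $ i $ j = 0) \<and>
      (\<forall>i\<in>I. \<forall>j\<in>I. (\<Sum>k\<in>I. S $ i $ k * B0 $ k $ j) = (if i = j then 1 else 0))"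
  proof (intro conjI allI ballI impI)
    fix i j assume "i \<notin> I \<or> j \<notin> I" then show "B0$i$j = 0" by (auto simp: B0_def)
  next
    fix i j assume ij: "i \<in> I" "j \<in> I"
    have "(\<Sum>k\<in>I. S $ i $ k * B0 $ k $ j) = (\<Sum>k\<in>I. S' $ i $ k * B' $ k $ j)"
      using ij by (intro sum.cong) (auto simp: B0_def S'_def)
    also have "\<dots> = (\<Sum>k\<in>UNIV. S' $ i $ k * B' $ k $ j)"
      using ij by (intro sum.mono_neutral_left) (auto simp: S'_def)
    also have "\<dots> = (S' ** B')$i$j" by (simp add: matrix_matrix_mult_def)
    also have "\<dots> = (if i = j then 1 else 0)" by (simp add: SB' mat_def)
    finally show "(\<Sum>k\<in>I. S $ i $ k * B0 $ k $ j) = (if i = j then 1 else 0)" .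
  qed
  have uniq: "B = B0" if Bspec: "(\<forall>i j. (i \<notin> I \<or> j \<notin> I) \<longrightarrow> B $ i $ j = 0) \<and>
      (\<forall>i\<in>I. \<forall>j\<in>I. (\<Sum>k\<in>I. S $ i $ k * B $ k $ j) = (if i = j then 1 else 0))" for B
  proof -
    have "B$i$j = B0$i$j" for i j
    proof (cases "i \<in> I \<and> j \<in> I")
      case False then show ?thesis using Bspec B0spec by (metis (no_types))
    next
      case True
      then have jI: "j \<in> I" by simp
      define d :: "real^'n" where "d = (\<chi> k. B$k$j - B0$k$j)"
      have doff: "d$k = 0" if "k \<notin> I" for k using that Bspec B0spec by (simp add: d_def)
      have Sd: "(S *v d)$i = 0" if "i \<in> I" for i
      proof -
        have "(S *v d)$i = (\<Sum>k\<in>UNIV. S$i$k * d$k)" by (simp add: matrix_vector_mult_def)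
        also have "\<dots> = (\<Sum>k\<in>I. S$i$k * d$k)"
          using doff by (intro sum.mono_neutral_right) auto
        also have "\<dots> = (\<Sum>k\<in>I. S$i$k * B$k$j) - (\<Sum>k\<in>I. S$i$k * B0$k$j)"
          by (simp add: d_def right_diff_distrib sum_subtractf)
        also have "\<dots> = 0" using Bspec B0spec that jI by simp
        finally show ?thesis .
      qed
      have "d \<bullet> (S *v d) = 0"
        unfolding inner_vec_def using doff Sd
        by (intro sum.neutral) (metis inner_real_def mult_zero_left mult_zero_right)
      then have "S *v d = 0" using psd_zero[OF sym psd] by blast
      then have "d = 0" using pd_inj[OF sym psd inv] by blast
      then have "d$i = 0" by simp
      then show ?thesis by (simp add: d_def)
    qed
    then show ?thesis by (simp add: vec_eq_iff)
  qed
  have eq: "sub_inv S I = B0"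
    unfolding sub_inv_def
    apply (rule the_equality)
     apply (rule B0spec)
    by (rule uniq)
  show "\<forall>i\<in>I. \<forall>j\<in>I. (\<Sum>k\<in>I. S$i$k * sub_inv S I $k$j) = (if i=j then 1 else 0)"
    using B0spec eq by simp
  show "\<forall>i\<in>I. \<forall>j\<in>I. sub_inv S I $i$j = sub_inv S I $j$i"
    using B'sym by (simp add: eq B0_def)
qed

lemma Q_facts:
  fixes S :: "real^'n::finite^'n"
  assumes sym: "transpose S = S" and psd: "\<forall>x. 0 \<le> x \<bullet> (S *v x)" and inv: "invertible S"
  shows "transpose (matrix_inv S) = matrix_inv S"
    and "\<exists>m>0. \<forall>v. m * (v \<bullet> v) \<le> v \<bullet> (matrix_inv S *v v)"
proof -
  let ?Q = "matrix_inv S"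
  show Qsym: "transpose ?Q = ?Q" by (rule minv_sym[OF inv sym])
  have SQ: "S *v (?Q *v v) = v" for v
    using minv(1)[OF inv] by (simp add: matrix_vector_mul_assoc)
  have Qpsd: "\<forall>x. 0 \<le> x \<bullet> (?Q *v x)"
  proof
    fix x
    have "x \<bullet> (?Q *v x) = (?Q *v x) \<bullet> (S *v (?Q *v x))"
      by (simp add: SQ inner_commute)
    then show "0 \<le> x \<bullet> (?Q *v x)" using psd by simp
  qed
  have Qinv: "invertible ?Q"
    unfolding invertible_def using minv[OF inv] by blast
  define f where "f v = v \<bullet> (?Q *v v)" for v :: "real^'n"
  have cont: "continuous_on (sphere 0 1) f"
    unfolding f_def by (intro continuous_intros)
  obtain i :: 'n where True by simp
  have ne: "sphere (0::real^'n) 1 \<noteq> {}"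
  proof -
    have "axis i (1::real) \<in> sphere (0::real^'n) 1" by (simp add: sphere_def dist_norm)
    then show ?thesis by blast
  qed
  obtain x0 where x0: "x0 \<in> sphere 0 1" and min: "\<forall>y\<in>sphere 0 1. f x0 \<le> f y"
    using continuous_attains_inf[OF compact_sphere ne cont] by blast
  have x0nz: "x0 \<noteq> 0" using x0 by auto
  have mpos: "f x0 > 0" unfolding f_def by (rule pd_pos[OF Qsym Qpsd Qinv x0nz])
  have "\<forall>v. f x0 * (v \<bullet> v) \<le> v \<bullet> (?Q *v v)"
  proof
    fix v :: "real^'n"
    show "f x0 * (v \<bullet> v) \<le> v \<bullet> (?Q *v v)"
    proof (cases "v = 0")
      case True then show ?thesis by simp
    next
      case False
      define w where "w = (1 / norm v) *\<^sub>R v"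
      have "w \<in> sphere 0 1" using False by (simp add: w_def sphere_def dist_norm)
      then have "f x0 \<le> f w" using min by blast
      also have "f w = (1/norm v)^2 * (v \<bullet> (?Q *v v))"
        by (simp add: f_def w_def matrix_vector_mult_scaleR power2_eq_square)
      finally have "f x0 * (norm v)^2 \<le> (v \<bullet> (?Q *v v))"
        using False by (simp add: field_simps)
      then show ?thesis by (simp add: power2_norm_eq_inner)
    qed
  qed
  then show "\<exists>m>0. \<forall>v. m * (v \<bullet> v) \<le> v \<bullet> (?Q *v v)" using mpos by blast
qed

lemma lam_facts:
  fixes S :: "real^'n::finite^'n"
  assumes sym: "transpose S = S" and psd: "\<forall>x. 0 \<le> x \<bullet> (S *v x)" and inv: "invertible S"
    and ctI: "\<forall>i\<in>I. ct $ i = c $ i"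
    and ctO: "\<forall>j. j \<notin> I \<longrightarrow> ct $ j = (\<Sum>i\<in>I. S $ j $ i * (\<Sum>l\<in>I. sub_inv S I $ i $ l * c $ l))"
  defines "lam \<equiv> (\<chi> i. if i \<in> I then (\<Sum>l\<in>I. sub_inv S I $ i $ l * c $ l) else 0)"
  shows "matrix_inv S *v ct = lam"
    and "\<And>k. k \<in> I \<Longrightarrow> (\<Sum>i\<in>I. c $ i * sub_inv S I $ i $ k) = lam $ k"
proof -
  note B = sub_inv_props[OF sym psd inv, of I]
  have Slam: "S *v lam = ct"
  proof (subst vec_eq_iff, rule allI)
    fix j
    have "(S *v lam) $ j = (\<Sum>i\<in>UNIV. S$j$i * lam$i)" by (simp add: matrix_vector_mult_def)
    also have "\<dots> = (\<Sum>i\<in>I. S$j$i * (\<Sum>l\<in>I. sub_inv S I $ i $ l * c $ l))"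
      by (rule sum.mono_neutral_cong_right) (auto simp: lam_def)
    also have "\<dots> = ct $ j"
    proof (cases "j \<in> I")
      case False then show ?thesis using ctO by simp
    next
      case True
      have "(\<Sum>i\<in>I. S$j$i * (\<Sum>l\<in>I. sub_inv S I $ i $ l * c $ l)) =
            (\<Sum>l\<in>I. (\<Sum>i\<in>I. S$j$i * sub_inv S I $ i $ l) * c $ l)"
        by (simp add: sum_distrib_left sum_distrib_right mult.assoc) (rule sum.swap)
      also have "\<dots> = (\<Sum>l\<in>I. (if j = l then 1 else 0) * c $ l)"
        using B(1) True by (intro sum.cong) auto
      also have "\<dots> = (\<Sum>l\<in>I. if l = j then c $ j else 0)"
        by (intro sum.cong) auto
      also have "\<dots> = c $ j" using True by simp
      finally show ?thesis using ctI True by simp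
    qed
    finally show "(S *v lam) $ j = ct $ j" .
  qed
  show "matrix_inv S *v ct = lam"
    using minv(2)[OF inv] unfolding Slam[symmetric] by (simp add: matrix_vector_mul_assoc)
  fix k assume kI: "k \<in> I"
  show "(\<Sum>i\<in>I. c $ i * sub_inv S I $ i $ k) = lam $ k"
    using B(2) kI by (simp add: lam_def mult.commute)
qed

lemma Basis_vec_range: "(Basis :: (real^'n::finite) set) = range (\<lambda>i. axis i 1)"
  using axis_inverse by (auto simp: Basis_vec_def)

lemma inj_axis1: "inj (\<lambda>i::'n::finite. axis i (1::real))"
  by (auto simp: inj_on_def axis_eq_axis)

lemma axis_comp: "(axis j (1::real) :: real^'n::finite) $ i = (if i = j then 1 else 0)"
  by (simp add: axis_def)

lemma vec_basis_sum_nth: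
  fixes g :: "real^'n::finite \<Rightarrow> real"
  assumes "B \<subseteq> Basis"
  shows "(\<Sum>b\<in>B. g b *\<^sub>R b :: real^'n) $ i = (if axis i 1 \<in> B then g (axis i 1) else 0)"
proof -
  have "(\<Sum>b\<in>B. g b *\<^sub>R b :: real^'n) $ i = (\<Sum>b\<in>B. g b * b $ i)" by simp
  also have "\<dots> = (\<Sum>b\<in>B. if b = axis i 1 then g b else 0)"
  proof (intro sum.cong refl)
    fix b assume "b \<in> B"
    then obtain j where j: "b = axis j 1" using assms axis_inverse by blast
    show "g b * b $ i = (if b = axis i 1 then g b else 0)"
      using j by (auto simp: axis_comp axis_eq_axis)
  qed
  also have "\<dots> = (if axis i 1 \<in> B then g (axis i 1) else 0)"
    using finite_subset[OF assms] by (simp add: sum.delta')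
  finally show ?thesis .
qed

lemma nn_integral_vec_prod:
  fixes \<phi> :: "'n::finite \<Rightarrow> real \<Rightarrow> ennreal"
  assumes [measurable]: "\<And>i. \<phi> i \<in> borel_measurable borel"
  shows "(\<integral>\<^sup>+x. (\<Prod>i\<in>UNIV. \<phi> i (x$i)) \<partial>(lborel :: (real^'n) measure)) = (\<Prod>i\<in>UNIV. \<integral>\<^sup>+t. \<phi> i t \<partial>lborel)"
proof -
  define f where "f b = \<phi> (axis_index (b::real^'n))" for b
  have "(\<integral>\<^sup>+x. (\<Prod>b\<in>Basis. f b (x \<bullet> b)) \<partial>(lborel :: (real^'n) measure)) = (\<Prod>b\<in>Basis. (\<integral>\<^sup>+x. f b x \<partial>lborel))"
    by (rule nn_integral_lborel_prod) (auto simp: f_def)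
  moreover have "(\<Prod>b\<in>Basis. f b (x \<bullet> b)) = (\<Prod>i\<in>UNIV. \<phi> i (x$i))" for x :: "real^'n"
    unfolding Basis_vec_range by (subst prod.reindex[OF inj_axis1]) (simp add: f_def inner_axis)
  moreover have "(\<Prod>b\<in>(Basis :: (real^'n) set). (\<integral>\<^sup>+x. f b x \<partial>lborel)) = (\<Prod>i\<in>UNIV. \<integral>\<^sup>+t. \<phi> i t \<partial>lborel)"
    unfolding Basis_vec_range by (subst prod.reindex[OF inj_axis1]) (simp add: f_def)
  ultimately show ?thesis by simp
qed

lemma meas_test:
  fixes lo :: "'n::finite \<Rightarrow> real"
  shows "(\<lambda>y::real^'n. indicator {y. \<forall>i. lo i < y$i} y :: real) \<in> borel_measurable borel"
  by measurable

lemma nn_integral_coord_split: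
  fixes k :: "'n::finite" and R :: "real^'n \<Rightarrow> ennreal" and \<phi> :: "real \<Rightarrow> ennreal"
  assumes [measurable]: "R \<in> borel_measurable borel" "\<phi> \<in> borel_measurable borel"
  shows "(\<integral>\<^sup>+y. \<phi> (y$k) * R (\<chi> i. if i = k then 0 else y$i) \<partial>(lborel :: (real^'n) measure)) =
     (\<integral>\<^sup>+t. \<phi> t \<partial>lborel) *
     (\<integral>\<^sup>+f. R (\<Sum>b\<in>Basis - {axis k 1}. f b *\<^sub>R b) \<partial>(PiM (Basis - {axis k 1}) (\<lambda>_. lborel)))"
proof -
  define e :: "real^'n" where "e = axis k 1"
  define J where "J = (Basis :: (real^'n) set) - {e}"
  have eB: "e \<in> Basis" by (simp add: e_def)
  have BJ: "Basis = insert e J" using eB by (auto simp: J_def)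
  have fJ: "finite J" "e \<notin> J" by (auto simp: J_def)
  define G where "G y = \<phi> (y$k) * R (\<chi> i. if i = k then 0 else y$i)" for y :: "real^'n"
  have Gm[measurable]: "G \<in> borel_measurable borel"
  proof -
    have "(\<lambda>y::real^'n. \<chi> i. if i = k then 0 else y$i) = (\<lambda>y. \<Sum>i\<in>UNIV. (if i = k then 0 else y$i) *\<^sub>R axis i 1)"
    proof (rule ext, subst vec_eq_iff, rule allI)
      fix y :: "real^'n" and j
      have "(\<Sum>i\<in>UNIV. (if i = k then 0 else y$i) *\<^sub>R (axis i 1 :: real^'n)) $ j
          = (\<Sum>i\<in>UNIV. (if i = k then 0 else y$i) * (if j = i then 1 else 0))"
        by (simp add: axis_comp)
      also have "\<dots> = (\<Sum>i\<in>UNIV. if i = j then (if j = k then 0 else y$j) else 0)"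
        by (intro sum.cong) auto
      also have "\<dots> = (if j = k then 0 else y$j)"
        by simp
      finally show "(\<chi> i. if i = k then 0 else y$i) $ j = (\<Sum>i\<in>UNIV. (if i = k then 0 else y$i) *\<^sub>R (axis i 1 :: real^'n)) $ j"
        by simp
    qed
    moreover have "(\<lambda>y::real^'n. \<Sum>i\<in>UNIV. (if i = k then 0 else y$i) *\<^sub>R (axis i 1 :: real^'n)) \<in> borel_measurable borel"
      by measurable
    ultimately have [measurable]: "(\<lambda>y::real^'n. \<chi> i. if i = k then 0 else y$i) \<in> borel_measurable borel"
      by simp
    show ?thesis unfolding G_def by measurable
  qed
  have sm[measurable]: "(\<lambda>f. \<Sum>b\<in>Basis. f b *\<^sub>R b :: real^'n) \<in> measurable (PiM Basis (\<lambda>_. lborel)) borel"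
    by measurable
  interpret product_sigma_finite "\<lambda>_. lborel" by standard
  have "(\<integral>\<^sup>+y. G y \<partial>(lborel :: (real^'n) measure)) = (\<integral>\<^sup>+f. G (\<Sum>b\<in>Basis. f b *\<^sub>R b) \<partial>(PiM Basis (\<lambda>_. lborel)))"
    by (subst lborel_eq[where 'a="real^'n"]) (simp add: nn_integral_distr)
  also have "\<dots> = (\<integral>\<^sup>+f. \<integral>\<^sup>+t. G (\<Sum>b\<in>Basis. (f(e:=t)) b *\<^sub>R b) \<partial>lborel \<partial>(PiM J (\<lambda>_. lborel)))"
    unfolding BJ by (rule product_nn_integral_insert[OF fJ]) (simp add: BJ[symmetric])
  also have "\<dots> = (\<integral>\<^sup>+f. \<integral>\<^sup>+t. \<phi> t * R (\<Sum>b\<in>J. f b *\<^sub>R b) \<partial>lborel \<partial>(PiM J (\<lambda>_. lborel)))"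
  proof (intro nn_integral_cong)
    fix f :: "real^'n \<Rightarrow> real" and t :: real
    have JB: "J \<subseteq> Basis" by (auto simp: J_def)
    have "(\<Sum>b\<in>Basis. (f(e:=t)) b *\<^sub>R b) = t *\<^sub>R e + (\<Sum>b\<in>J. f b *\<^sub>R b)"
      unfolding BJ using fJ by (simp add: sum.insert) (intro sum.cong refl, auto)
    moreover have "(\<Sum>b\<in>J. f b *\<^sub>R b) $ i = (if i = k then 0 else f (axis i 1))" for i
      using vec_basis_sum_nth[OF JB, of f i] by (auto simp: J_def e_def axis_eq_axis)
    ultimately show "G (\<Sum>b\<in>Basis. (f(e:=t)) b *\<^sub>R b) = \<phi> t * R (\<Sum>b\<in>J. f b *\<^sub>R b)"
      unfolding G_def by (auto simp: e_def axis_comp vec_eq_iff intro!: arg_cong[where f=R] arg_cong2[where f="(*)"])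
  qed
  also have "\<dots> = (\<integral>\<^sup>+f. (\<integral>\<^sup>+t. \<phi> t \<partial>lborel) * R (\<Sum>b\<in>J. f b *\<^sub>R b) \<partial>(PiM J (\<lambda>_. lborel)))"
    by (intro nn_integral_cong) (simp add: nn_integral_multc)
  also have "\<dots> = (\<integral>\<^sup>+t. \<phi> t \<partial>lborel) * (\<integral>\<^sup>+f. R (\<Sum>b\<in>J. f b *\<^sub>R b) \<partial>(PiM J (\<lambda>_. lborel)))"
    by (rule nn_integral_cmult) measurable
  finally show ?thesis unfolding G_def J_def e_def .
qed

lemma exp_moment_nn:
  fixes l :: real
  assumes l: "l > 0"
  shows "(\<integral>\<^sup>+t. ennreal (t^n * exp (-(l*t))) * indicator {0..} t \<partial>lborel) = ennreal (fact n / l^(n+1))"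
proof -
  have "ennreal (fact n) = (\<integral>\<^sup>+x. ennreal (x^n * exp (-x)) * indicator {0 ..} x \<partial>lborel)"
    using nn_intergal_power_times_exp_Ici[of n] by simp
  also have "\<dots> = ennreal l * (\<integral>\<^sup>+t. ennreal ((l*t)^n * exp (-(l*t))) * indicator {0..} (l*t) \<partial>lborel)"
    using nn_integral_real_affine[of "\<lambda>x. ennreal (x^n * exp (-x)) * indicator {0 ..} x" l 0] l
    by simp
  also have "(\<lambda>t. ennreal ((l*t)^n * exp (-(l*t))) * indicator {0..} (l*t)) =
      (\<lambda>t. ennreal (l^n) * (ennreal (t^n * exp (-(l*t))) * indicator {0..} t))"
  proof
    fix t show "ennreal ((l*t)^n * exp (-(l*t))) * indicator {0..} (l*t) =
      ennreal (l^n) * (ennreal (t^n * exp (-(l*t))) * indicator {0..} t)"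
      using l by (cases "t \<ge> 0") (auto simp: ennreal_mult'[symmetric] power_mult_distrib
          zero_le_mult_iff mult_ac indicator_def not_le)
  qed
  also have "(\<integral>\<^sup>+t. ennreal (l^n) * (ennreal (t^n * exp (-(l*t))) * indicator {0..} t) \<partial>lborel) =
     ennreal (l^n) * (\<integral>\<^sup>+t. ennreal (t^n * exp (-(l*t))) * indicator {0..} t \<partial>lborel)"
    by (rule nn_integral_cmult) measurable
  finally have eq: "ennreal (fact n) = ennreal (l^(n+1)) * (\<integral>\<^sup>+t. ennreal (t^n * exp (-(l*t))) * indicator {0..} t \<partial>lborel)"
    using l by (simp add: ennreal_mult'[symmetric] mult.assoc[symmetric] mult.commute)
  have "ennreal (fact n / l^(n+1)) = ennreal (1 / l^(n+1)) * ennreal (fact n)"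
    using l by (simp add: ennreal_mult'[symmetric])
  also have "\<dots> = (\<integral>\<^sup>+t. ennreal (t^n * exp (-(l*t))) * indicator {0..} t \<partial>lborel)"
    unfolding eq using l
    by (simp add: mult.assoc[symmetric] ennreal_mult'[symmetric] del: ennreal_mult)
  finally show ?thesis by simp
qed

lemma gauss_nn_finite:
  fixes m :: real
  assumes m: "m > 0"
  shows "(\<integral>\<^sup>+t. ennreal (exp (-(m/2) * t^2)) \<partial>lborel) < \<infinity>"
proof -
  define \<sigma> where "\<sigma> = 1 / sqrt m"
  define K where "K = sqrt (2 * pi * \<sigma>^2)"
  have s2: "\<sigma>^2 = 1/m" using m by (simp add: \<sigma>_def power_divide)
  have K: "K > 0" using m by (simp add: K_def s2)
  have eq: "exp (-(m/2) * t^2) = K * normal_density 0 \<sigma> t" for t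
    using K m by (simp add: normal_density_def K_def s2 field_simps)
  have sp: "\<sigma> > 0" using m by (simp add: \<sigma>_def)
  have "integrable lborel (\<lambda>t. K * normal_density 0 \<sigma> t)"
    using integrable_normal_density[OF sp, of 0] by simp
  then have "integrable lborel (\<lambda>t. exp (-(m/2) * t^2))" unfolding eq .
  then show ?thesis
    using integrableD(2)[of lborel "\<lambda>t. exp (-(m/2) * t^2)"] by (simp add: top.not_eq_extremum)
qed

lemma prod_ge_factor:
  fixes f :: "'a \<Rightarrow> real"
  assumes "finite A" "k \<in> A" "\<And>i. i \<in> A \<Longrightarrow> 1 \<le> f i"
  shows "f k \<le> prod f A"
proof -
  have "prod f A = f k * prod f (A - {k})" using assms by (simp add: prod.remove)
  moreover have "1 \<le> prod f (A - {k})" using assms by (intro prod_ge_1) auto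
  moreover have "0 \<le> f k" using assms(2,3) by (meson order.trans zero_le_one)
  ultimately show ?thesis by (metis mult_left_mono mult.right_neutral)
qed

definition Dsc :: "'d set \<Rightarrow> real \<Rightarrow> real^'d::finite \<Rightarrow> real^'d" where
  "Dsc I u y = (\<chi> i. if i\<in>I then y$i/u else y$i)"

definition hfun :: "real^'d::finite^'d \<Rightarrow> real^'d \<Rightarrow> real^'d \<Rightarrow> 'd set \<Rightarrow> real \<Rightarrow> real^'d \<Rightarrow> real" where
  "hfun Q lam dl I u y = exp (-(lam \<bullet> y) - (Dsc I u y \<bullet> (Q *v Dsc I u y))/2) *
      indicator {y. \<forall>i. (if i\<in>I then 0 else -(dl$i*u)) < y$i} y"

definition P0 :: "'d set \<Rightarrow> real^'d::finite \<Rightarrow> real^'d" where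
  "P0 I y = (\<chi> i. if i\<in>I then 0 else y$i)"

definition Lfun :: "real^'d::finite^'d \<Rightarrow> real^'d \<Rightarrow> real^'d \<Rightarrow> 'd set \<Rightarrow> real^'d \<Rightarrow> real" where
  "Lfun Q lam dl I y = exp (-(lam \<bullet> y) - (P0 I y \<bullet> (Q *v P0 I y))/2) *
      indicator {y. \<forall>i. (i\<in>I \<or> dl$i = 0) \<longrightarrow> 0 < y$i} y"

definition phi :: "real^'d::finite \<Rightarrow> real \<Rightarrow> 'd set \<Rightarrow> 'd \<Rightarrow> real \<Rightarrow> real" where
  "phi lam m I i t = (if i\<in>I then (1+t) * exp (-(lam$i*t)) * indicator {0..} t else exp (-(m/2) * t^2))"

definition Hfun :: "real^'d::finite \<Rightarrow> real \<Rightarrow> 'd set \<Rightarrow> real^'d \<Rightarrow> real" where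
  "Hfun lam m I y = (\<Prod>i\<in>UNIV. phi lam m I i (y$i))"

lemma inner_expand: "(a::real^'d::finite) \<bullet> y = (\<Sum>i\<in>UNIV. a$i * y$i)"
  by (simp add: inner_vec_def)

lemma qf_expand: "(v::real^'d::finite) \<bullet> (Q *v v) = (\<Sum>i\<in>UNIV. \<Sum>j\<in>UNIV. v$i * Q$i$j * v$j)"
  by (simp add: inner_vec_def matrix_vector_mult_def sum_distrib_left mult.assoc)

lemma hfun_expand: "hfun Q lam dl I u y = exp (-(\<Sum>i\<in>UNIV. lam$i * y$i) -
   (\<Sum>i\<in>UNIV. \<Sum>j\<in>UNIV. (if i\<in>I then y$i/u else y$i) * Q$i$j * (if j\<in>I then y$j/u else y$j))/2) *
      indicator {y. \<forall>i. (if i\<in>I then 0 else -(dl$i*u)) < y$i} y"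
  unfolding hfun_def inner_expand[of lam] qf_expand Dsc_def by simp

lemma Lfun_expand: "Lfun Q lam dl I y = exp (-(\<Sum>i\<in>UNIV. lam$i * y$i) -
   (\<Sum>i\<in>UNIV. \<Sum>j\<in>UNIV. (if i\<in>I then 0 else y$i) * Q$i$j * (if j\<in>I then 0 else y$j))/2) *
      indicator {y. \<forall>i. (i\<in>I \<or> dl$i = 0) \<longrightarrow> 0 < y$i} y"
  unfolding Lfun_def inner_expand[of lam] qf_expand P0_def by simp

lemma hfun_meas[measurable]: "hfun Q lam dl I u \<in> borel_measurable borel"
  unfolding hfun_expand[abs_def] by measurable

lemma Lfun_meas[measurable]: "Lfun Q lam dl I \<in> borel_measurable borel"
  unfolding Lfun_expand[abs_def] by measurable

lemma phi_meas[measurable]: "phi lam m I i \<in> borel_measurable borel"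
  unfolding phi_def by measurable

lemma Hfun_meas[measurable]: "Hfun lam m I \<in> borel_measurable borel"
  unfolding Hfun_def by measurable

lemma phi_nonneg: "0 \<le> phi lam m I i t"
  unfolding phi_def by (auto simp: indicator_def)

lemma Hfun_integrable:
  assumes m: "m > 0" and lamI: "\<And>i. i\<in>I \<Longrightarrow> lam$i > 0"
  shows "integrable lborel (Hfun lam m I)"
proof (rule integrableI_nonneg)
  show "Hfun lam m I \<in> borel_measurable lborel" by simp
  show "AE x in lborel. 0 \<le> Hfun lam m I x"
    unfolding Hfun_def by (intro AE_I2 prod_nonneg) (simp add: phi_nonneg)
  have "(\<integral>\<^sup>+x. ennreal (Hfun lam m I x) \<partial>lborel) = (\<integral>\<^sup>+x. (\<Prod>i\<in>UNIV. ennreal (phi lam m I i (x$i))) \<partial>lborel)"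
    unfolding Hfun_def by (intro nn_integral_cong) (simp add: prod_ennreal phi_nonneg)
  also have "\<dots> = (\<Prod>i\<in>UNIV. \<integral>\<^sup>+t. ennreal (phi lam m I i t) \<partial>lborel)"
    by (rule nn_integral_vec_prod) measurable
  also have "\<dots> < \<infinity>"
  proof -
    have "(\<integral>\<^sup>+t. ennreal (phi lam m I i t) \<partial>lborel) \<noteq> \<infinity>" for i
    proof (cases "i \<in> I")
      case True
      have l: "lam$i > 0" using lamI True by simp
      have "(\<integral>\<^sup>+t. ennreal (phi lam m I i t) \<partial>lborel) =
         (\<integral>\<^sup>+t. ennreal (t^0 * exp (-(lam$i*t))) * indicator {0..} t + ennreal (t^1 * exp (-(lam$i*t))) * indicator {0..} t \<partial>lborel)"
        using True by (intro nn_integral_cong)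
          (auto simp: phi_def indicator_def ennreal_plus[symmetric] distrib_right simp del: ennreal_plus)
      also have "\<dots> = (\<integral>\<^sup>+t. ennreal (t^0 * exp (-(lam$i*t))) * indicator {0..} t \<partial>lborel) +
            (\<integral>\<^sup>+t. ennreal (t^1 * exp (-(lam$i*t))) * indicator {0..} t \<partial>lborel)"
        by (rule nn_integral_add) measurable
      also have "\<dots> = ennreal (fact 0 / lam$i^(0+1)) + ennreal (fact 1 / lam$i^(1+1))"
        using exp_moment_nn[OF l, of 0] exp_moment_nn[OF l, of 1] by simp
      finally show ?thesis by simp
    next
      case False
      have "(\<integral>\<^sup>+t. ennreal (phi lam m I i t) \<partial>lborel) = (\<integral>\<^sup>+t. ennreal (exp (-(m/2) * t^2)) \<partial>lborel)"
        using False by (simp add: phi_def)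
      then show ?thesis using gauss_nn_finite[OF m] by simp
    qed
    then show ?thesis by (simp add: ennreal_prod_eq_top top.not_eq_extremum[symmetric])
  qed
  finally show "(\<integral>\<^sup>+x. ennreal (Hfun lam m I x) \<partial>lborel) < \<infinity>" .
qed

lemma hfun_bound:
  fixes Q :: "real^'d::finite^'d"
  assumes m: "m > 0" and Qm: "\<And>v. m * (v \<bullet> v) \<le> v \<bullet> (Q *v v)"
    and lamO: "\<And>j. j \<notin> I \<Longrightarrow> lam$j = 0" and kI: "k \<in> I"
  shows "\<bar>hfun Q lam dl I u y\<bar> \<le> Hfun lam m I y \<and> \<bar>y$k * hfun Q lam dl I u y\<bar> \<le> Hfun lam m I y"
proof (cases "\<forall>i. (if i\<in>I then 0 else -(dl$i*u)) < y$i")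
  case False
  then have "hfun Q lam dl I u y = 0" by (simp add: hfun_def)
  moreover have "0 \<le> Hfun lam m I y" unfolding Hfun_def by (intro prod_nonneg) (simp add: phi_nonneg)
  ultimately show ?thesis by simp
next
  case True
  then have ypos: "\<And>i. i \<in> I \<Longrightarrow> 0 < y$i" by (metis)
  define a where "a i = (if i\<in>I then lam$i*y$i else (m/2)*(y$i)^2)" for i
  define g where "g i = (if i\<in>I then 1 + y$i else 1)" for i
  define E where "E = exp (-(lam \<bullet> y) - (Dsc I u y \<bullet> (Q *v Dsc I u y))/2)"
  have hE: "hfun Q lam dl I u y = E" using True by (simp add: hfun_def E_def)
  have lamy: "lam \<bullet> y = (\<Sum>i\<in>UNIV. if i\<in>I then lam$i*y$i else 0)"
    unfolding inner_expand by (intro sum.cong) (auto simp: lamO)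
  have DD: "(\<Sum>i\<in>UNIV. if i\<in>I then 0 else (y$i)^2) \<le> Dsc I u y \<bullet> Dsc I u y"
    unfolding inner_expand by (intro sum_mono) (auto simp: Dsc_def power2_eq_square)
  have "(\<Sum>i\<in>UNIV. a i) = (\<Sum>i\<in>UNIV. if i\<in>I then lam$i*y$i else 0) + (m/2) * (\<Sum>i\<in>UNIV. if i\<in>I then 0 else (y$i)^2)"
    by (simp add: a_def sum.distrib[symmetric] sum_distrib_left if_distrib cong: if_cong)
  also have "\<dots> \<le> lam \<bullet> y + (Dsc I u y \<bullet> (Q *v Dsc I u y))/2"
    using DD Qm[of "Dsc I u y"] m lamy by (simp add: field_simps) (smt (verit) mult_left_mono)
  finally have asum: "(\<Sum>i\<in>UNIV. a i) \<le> lam \<bullet> y + (Dsc I u y \<bullet> (Q *v Dsc I u y))/2" .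
  have "E \<le> exp (-(\<Sum>i\<in>UNIV. a i))" unfolding E_def using asum by simp
  also have "\<dots> = (\<Prod>i\<in>UNIV. exp (- a i))" by (simp add: exp_sum sum_negf[symmetric])
  finally have E1: "E \<le> (\<Prod>i\<in>UNIV. exp (- a i))" .
  have H: "Hfun lam m I y = (\<Prod>i\<in>UNIV. g i) * (\<Prod>i\<in>UNIV. exp (- a i))"
    unfolding Hfun_def prod.distrib[symmetric]
    by (intro prod.cong refl) (auto simp: phi_def g_def a_def ypos less_imp_le)
  have g1: "1 \<le> g i" for i using ypos by (auto simp: g_def less_imp_le)
  have G1: "1 \<le> (\<Prod>i\<in>UNIV. g i)" using g1 by (intro prod_ge_1) auto
  have Gk: "g k \<le> (\<Prod>i\<in>UNIV. g i)" using g1 by (intro prod_ge_factor) auto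
  have yk: "0 < y$k" "y$k \<le> g k" using ypos kI by (auto simp: g_def)
  have Pp: "0 \<le> (\<Prod>i\<in>UNIV. exp (- a i))" by (intro prod_nonneg) auto
  have E0: "0 \<le> E" by (simp add: E_def)
  show ?thesis
  proof
    show "\<bar>hfun Q lam dl I u y\<bar> \<le> Hfun lam m I y"
      unfolding hE H using E0 E1 G1 Pp by (simp add: order.trans[OF _ mult_right_mono[OF G1 Pp]])
    have "y$k * E \<le> (\<Prod>i\<in>UNIV. g i) * (\<Prod>i\<in>UNIV. exp (- a i))"
      using yk Gk E0 E1 Pp by (intro mult_mono) auto
    then show "\<bar>y$k * hfun Q lam dl I u y\<bar> \<le> Hfun lam m I y"
      unfolding hE H using yk E0 by (simp add: abs_mult)
  qed
qed

lemma comp_lim: "((\<lambda>u::real. if i\<in>I then (y::real)/u else y) \<longlongrightarrow> (if i\<in>I then 0 else y)) at_top"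
proof (cases "i \<in> I")
  case True
  have "((\<lambda>u::real. y/u) \<longlongrightarrow> 0) at_top"
    by (rule tendsto_divide_0[OF tendsto_const]) (rule filterlim_at_top_imp_at_infinity[OF filterlim_ident])
  then show ?thesis using True by simp
qed simp

lemma hfun_lim:
  assumes dl: "\<And>j. j \<notin> I \<Longrightarrow> dl$j \<ge> 0"
  shows "((\<lambda>u. hfun Q lam dl I u y) \<longlongrightarrow> Lfun Q lam dl I y) at_top"
proof -
  have ev: "\<forall>\<^sub>F u in at_top. indicator {y. \<forall>i. (if i\<in>I then 0 else -(dl$i*u)) < y$i} y =
      (indicator {y. \<forall>i. (i\<in>I \<or> dl$i = 0) \<longrightarrow> 0 < y$i} y :: real)"
  proof -
    have "\<forall>\<^sub>F u in at_top. \<forall>i. ((if i\<in>I then 0 else -(dl$i*u)) < y$i) = ((i\<in>I \<or> dl$i = 0) \<longrightarrow> 0 < y$i)"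
    proof (rule eventually_all_finite)
      fix i
      show "\<forall>\<^sub>F u in at_top. ((if i\<in>I then 0 else -(dl$i*u)) < y$i) = ((i\<in>I \<or> dl$i = 0) \<longrightarrow> 0 < y$i)"
      proof (cases "i \<in> I \<or> dl$i = 0")
        case True then show ?thesis by auto
      next
        case False
        then have d: "dl$i > 0" using dl[of i] by auto
        show ?thesis
          using eventually_gt_at_top[of "- y$i / dl$i"]
        proof eventually_elim
          case (elim u)
          then have "- y$i < dl$i * u" using d by (simp add: field_simps)
          then show ?case using False by auto
        qed
      qed
    qed
    then show ?thesis by eventually_elim (simp add: indicator_def)
  qed
  have lim1: "((\<lambda>u. exp (-(\<Sum>i\<in>UNIV. lam$i * y$i) -
   (\<Sum>i\<in>UNIV. \<Sum>j\<in>UNIV. (if i\<in>I then y$i/u else y$i) * Q$i$j * (if j\<in>I then y$j/u else y$j))/2)) \<longlongrightarrow>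
     exp (-(\<Sum>i\<in>UNIV. lam$i * y$i) -
   (\<Sum>i\<in>UNIV. \<Sum>j\<in>UNIV. (if i\<in>I then 0 else y$i) * Q$i$j * (if j\<in>I then 0 else y$j))/2)) at_top"
    by (intro tendsto_intros comp_lim) simp
  show ?thesis
    unfolding hfun_expand Lfun_expand
    by (rule tendsto_mult[OF lim1 tendsto_eventually[OF ev]])
qed

lemma Lfun_nonneg: "0 \<le> Lfun Q lam dl I y"
  by (simp add: Lfun_def)

lemma Lfun_ratio:
  fixes Q :: "real^'d::finite^'d"
  assumes lamI: "\<And>i. i\<in>I \<Longrightarrow> lam$i > 0" and kI: "k \<in> I"
    and int: "integrable lborel (Lfun Q lam dl I)"
  shows "(\<integral>y. y$k * Lfun Q lam dl I y \<partial>lborel) = (\<integral>y. Lfun Q lam dl I y \<partial>lborel) / lam$k"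
    and "(\<integral>y. Lfun Q lam dl I y \<partial>lborel) > 0"
proof -
  define l where "l = lam$k"
  have l: "l > 0" using lamI kI by (simp add: l_def)
  define R where "R z = exp (-(lam \<bullet> z) - (P0 I z \<bullet> (Q *v P0 I z))/2) *
      indicator {z. \<forall>i. (i \<noteq> k \<and> (i\<in>I \<or> dl$i = 0)) \<longrightarrow> 0 < z$i} z" for z :: "real^'d"
  have Rm[measurable]: "R \<in> borel_measurable borel"
    unfolding R_def[abs_def] inner_expand[of lam] qf_expand P0_def vec_lambda_beta by measurable
  define \<phi>0 where "\<phi>0 t = exp (-(l*t)) * indicator {0<..} t" for t :: real
  define \<phi>1 where "\<phi>1 t = t * \<phi>0 t" for t :: real
  have [measurable]: "\<phi>0 \<in> borel_measurable borel" "\<phi>1 \<in> borel_measurable borel"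
    unfolding \<phi>0_def[abs_def] \<phi>1_def[abs_def] by measurable
  have decomp: "Lfun Q lam dl I y = \<phi>0 (y$k) * R (\<chi> i. if i = k then 0 else y$i)" for y
  proof -
    let ?z = "(\<chi> i. if i = k then 0 else y$i) :: real^'d"
    have "lam \<bullet> y = (\<Sum>i\<in>UNIV. lam$i * ?z$i + (if i = k then l * y$k else 0))"
      unfolding inner_expand by (intro sum.cong) (auto simp: l_def)
    also have "\<dots> = lam \<bullet> ?z + l * y$k"
      by (simp add: sum.distrib inner_expand[of lam ?z])
    finally have li: "lam \<bullet> y = lam \<bullet> ?z + l * y$k" .
    have pz: "P0 I ?z = P0 I y" using kI by (auto simp: P0_def vec_eq_iff)
    have ind: "(y \<in> {y. \<forall>i. (i\<in>I \<or> dl$i = 0) \<longrightarrow> 0 < y$i}) =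
       (0 < y$k \<and> ?z \<in> {z. \<forall>i. (i \<noteq> k \<and> (i\<in>I \<or> dl$i = 0)) \<longrightarrow> 0 < z$i})"
      using kI by auto
    define qq where "qq = P0 I y \<bullet> (Q *v P0 I y)"
    have e: "exp (-(lam \<bullet> y) - qq/2) = exp (-(l*y$k)) * exp (-(lam \<bullet> ?z) - qq/2)"
      unfolding li by (simp add: exp_add[symmetric] algebra_simps)
    have i: "indicator {y. \<forall>i. (i\<in>I \<or> dl$i = 0) \<longrightarrow> 0 < y$i} y =
       (indicator {0<..} (y$k) :: real) * indicator {z. \<forall>i. (i \<noteq> k \<and> (i\<in>I \<or> dl$i = 0)) \<longrightarrow> 0 < z$i} ?z"
      unfolding indicator_def using ind by (simp del: mem_Collect_eq)
    have "Lfun Q lam dl I y = exp (-(lam \<bullet> y) - qq/2) * indicator {y. \<forall>i. (i\<in>I \<or> dl$i = 0) \<longrightarrow> 0 < y$i} y"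
      by (simp add: Lfun_def qq_def)
    also have "\<dots> = \<phi>0 (y$k) * R ?z"
      unfolding e i R_def \<phi>0_def pz qq_def[symmetric] by (simp add: mult_ac)
    finally show ?thesis .
  qed
  have nn0: "(\<integral>\<^sup>+t. ennreal (\<phi>0 t) \<partial>lborel) = ennreal (1/l)"
  proof -
    have "(\<integral>\<^sup>+t. ennreal (\<phi>0 t) \<partial>lborel) = (\<integral>\<^sup>+t. ennreal (t^0 * exp (-(l*t))) * indicator {0..} t \<partial>lborel)"
      using AE_lborel_singleton[of 0]
      by (intro nn_integral_cong_AE) (auto elim!: eventually_mono simp: \<phi>0_def indicator_def)
    also have "\<dots> = ennreal (1/l)" using exp_moment_nn[OF l, of 0] by simp
    finally show ?thesis .
  qed
  have nn1: "(\<integral>\<^sup>+t. ennreal (\<phi>1 t) \<partial>lborel) = ennreal (1/l^2)"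
  proof -
    have "(\<integral>\<^sup>+t. ennreal (\<phi>1 t) \<partial>lborel) = (\<integral>\<^sup>+t. ennreal (t^1 * exp (-(l*t))) * indicator {0..} t \<partial>lborel)"
      by (intro nn_integral_cong) (auto simp: \<phi>1_def \<phi>0_def indicator_def)
    also have "\<dots> = ennreal (1/l^2)" using exp_moment_nn[OF l, of 1] by (simp add: power2_eq_square)
    finally show ?thesis .
  qed
  define K where "K = (\<integral>\<^sup>+f. ennreal (R (\<Sum>b\<in>Basis - {axis k 1}. f b *\<^sub>R b)) \<partial>(PiM (Basis - {axis k 1}) (\<lambda>_. lborel)))"
  have R0: "0 \<le> R z" for z by (simp add: R_def)
  have p00: "0 \<le> \<phi>0 t" for t by (simp add: \<phi>0_def)
  have L0: "(\<integral>\<^sup>+y. ennreal (Lfun Q lam dl I y) \<partial>lborel) = ennreal (1/l) * K"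
  proof -
    have "(\<integral>\<^sup>+y. ennreal (Lfun Q lam dl I y) \<partial>lborel) =
        (\<integral>\<^sup>+y. ennreal (\<phi>0 (y$k)) * ennreal (R (\<chi> i. if i = k then 0 else y$i)) \<partial>lborel)"
      unfolding decomp using R0 p00 by (simp add: ennreal_mult)
    also have "\<dots> = (\<integral>\<^sup>+t. ennreal (\<phi>0 t) \<partial>lborel) * K"
      unfolding K_def by (rule nn_integral_coord_split) measurable
    finally show ?thesis using nn0 by simp
  qed
  have L1: "(\<integral>\<^sup>+y. ennreal (y$k * Lfun Q lam dl I y) \<partial>lborel) = ennreal (1/l^2) * K"
  proof -
    have "(\<integral>\<^sup>+y. ennreal (y$k * Lfun Q lam dl I y) \<partial>lborel) =
        (\<integral>\<^sup>+y. ennreal (\<phi>1 (y$k)) * ennreal (R (\<chi> i. if i = k then 0 else y$i)) \<partial>lborel)"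
      unfolding decomp \<phi>1_def using R0 p00
      by (intro nn_integral_cong) (auto simp: \<phi>0_def indicator_def ennreal_mult[symmetric] mult.assoc)
    also have "\<dots> = (\<integral>\<^sup>+t. ennreal (\<phi>1 t) \<partial>lborel) * K"
      unfolding K_def by (rule nn_integral_coord_split) measurable
    finally show ?thesis using nn1 by simp
  qed
  have Lnn: "AE y in lborel. 0 \<le> Lfun Q lam dl I y" by (simp add: Lfun_nonneg)
  have yLnn: "AE y in lborel. 0 \<le> y$k * Lfun Q lam dl I y"
    unfolding decomp \<phi>0_def by (auto simp: indicator_def intro!: mult_nonneg_nonneg R0)
  have fin: "(\<integral>\<^sup>+y. ennreal (Lfun Q lam dl I y) \<partial>lborel) < \<infinity>"
    using int by (simp add: integrable_iff_bounded Lfun_nonneg)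
  then have Kfin: "K < \<infinity>" using l unfolding L0
    by (auto simp: ennreal_mult_less_top top.not_eq_extremum)
  have IL: "(\<integral>y. Lfun Q lam dl I y \<partial>lborel) = (1/l) * enn2real K"
    using integral_eq_nn_integral[OF _ Lnn] L0 l by (simp add: enn2real_mult)
  have IL1: "(\<integral>y. y$k * Lfun Q lam dl I y \<partial>lborel) = (1/l^2) * enn2real K"
    using integral_eq_nn_integral[OF _ yLnn] L1 l by (simp add: enn2real_mult)
  show "(\<integral>y. y$k * Lfun Q lam dl I y \<partial>lborel) = (\<integral>y. Lfun Q lam dl I y \<partial>lborel) / lam$k"
    unfolding IL IL1 l_def[symmetric] by (simp add: power2_eq_square)
  have K0: "K \<noteq> 0"
  proof
    assume "K = 0"
    then have "(\<integral>\<^sup>+y. ennreal (Lfun Q lam dl I y) \<partial>lborel) = 0" unfolding L0 by simp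
    then have "AE y in lborel. ennreal (Lfun Q lam dl I y) = 0"
      by (subst (asm) nn_integral_0_iff_AE) auto
    moreover have "Lfun Q lam dl I y > 0" if "y \<in> box 0 One" for y
    proof -
      have "0 < y$i" for i
        using that[unfolded mem_box, rule_format, of "axis i 1"] by (simp add: inner_axis)
      then show ?thesis by (simp add: Lfun_def)
    qed
    ultimately have "AE y in lborel. y \<notin> box 0 (One :: real^'d)"
      by (auto elim!: eventually_mono) (metis ennreal_eq_0_iff less_le_not_le)
    then have "emeasure lborel (box 0 (One :: real^'d)) = 0"
      by (subst (asm) AE_iff_measurable[OF _ refl]) auto
    moreover have "emeasure lborel (box 0 (One :: real^'d)) = 1"
      by (subst emeasure_lborel_box) (auto simp: inner_Basis)
    ultimately show False by simp
  qed
  show "(\<integral>y. Lfun Q lam dl I y \<partial>lborel) > 0"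
  proof -
    have "0 < enn2real K" using K0 Kfin by (simp add: enn2real_positive_iff zero_less_iff_neq_zero)
    then show ?thesis unfolding IL using l by simp
  qed
qed

lemma core:
  fixes Q :: "real^'d::finite^'d"
  assumes m: "m > 0" and Qm: "\<And>v. m * (v \<bullet> v) \<le> v \<bullet> (Q *v v)"
    and lamI: "\<And>i. i\<in>I \<Longrightarrow> lam$i > 0" and lamO: "\<And>j. j \<notin> I \<Longrightarrow> lam$j = 0"
    and dl: "\<And>j. j \<notin> I \<Longrightarrow> dl$j \<ge> 0" and kI: "k \<in> I"
  shows "((\<lambda>u. (\<integral>y. y$k * hfun Q lam dl I u y \<partial>lborel) / (\<integral>y. hfun Q lam dl I u y \<partial>lborel)) \<longlongrightarrow> 1/lam$k) at_top"
    and "\<forall>\<^sub>F u in at_top. 0 < (\<integral>y. hfun Q lam dl I u y \<partial>lborel)"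
proof -
  have Hint: "integrable lborel (Hfun lam m I)" by (rule Hfun_integrable[OF m lamI])
  have b0: "\<forall>\<^sub>F u in at_top. AE y in lborel. norm (hfun Q lam dl I u y) \<le> Hfun lam m I y"
    using hfun_bound[OF m Qm lamO kI] by simp
  have b1: "\<forall>\<^sub>F u in at_top. AE y in lborel. norm (y$k * hfun Q lam dl I u y) \<le> Hfun lam m I y"
  proof -
    have "norm (y$k * hfun Q lam dl I u y) \<le> Hfun lam m I y" for u y
      using hfun_bound[OF m Qm lamO kI, of dl u y] unfolding real_norm_def by blast
    then show ?thesis by simp
  qed
  have l0: "AE y in lborel. ((\<lambda>u. hfun Q lam dl I u y) \<longlongrightarrow> Lfun Q lam dl I y) at_top"
    using hfun_lim[OF dl] by simp
  have l1: "AE y in lborel. ((\<lambda>u. y$k * hfun Q lam dl I u y) \<longlongrightarrow> y$k * Lfun Q lam dl I y) at_top"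
    using hfun_lim[OF dl] by (simp add: tendsto_mult_left)
  have fm0: "Lfun Q lam dl I \<in> borel_measurable lborel" by simp
  have fm1: "(\<lambda>y. y$k * Lfun Q lam dl I y) \<in> borel_measurable lborel" by simp
  have sm0: "\<And>u. hfun Q lam dl I u \<in> borel_measurable lborel" by simp
  have sm1: "\<And>u. (\<lambda>y. y$k * hfun Q lam dl I u y) \<in> borel_measurable lborel" by simp
  have T0: "((\<lambda>u. \<integral>y. hfun Q lam dl I u y \<partial>lborel) \<longlongrightarrow> (\<integral>y. Lfun Q lam dl I y \<partial>lborel)) at_top"
    by (rule integral_dominated_convergence_at_top[OF fm0 sm0 Hint l0 b0])
  have Lint: "integrable lborel (Lfun Q lam dl I)"
    by (rule integrable_dominated_convergence_at_top[OF fm0 sm0 Hint l0 b0])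
  have T1: "((\<lambda>u. \<integral>y. y$k * hfun Q lam dl I u y \<partial>lborel) \<longlongrightarrow> (\<integral>y. y$k * Lfun Q lam dl I y \<partial>lborel)) at_top"
    by (rule integral_dominated_convergence_at_top[OF fm1 sm1 Hint l1 b1])
  have r1: "(\<integral>y. y$k * Lfun Q lam dl I y \<partial>lborel) = (\<integral>y. Lfun Q lam dl I y \<partial>lborel) / lam$k"
    and pos: "(\<integral>y. Lfun Q lam dl I y \<partial>lborel) > 0"
    using Lfun_ratio[OF lamI kI Lint] by auto
  have "((\<lambda>u. (\<integral>y. y$k * hfun Q lam dl I u y \<partial>lborel) / (\<integral>y. hfun Q lam dl I u y \<partial>lborel)) \<longlongrightarrow>
     (\<integral>y. y$k * Lfun Q lam dl I y \<partial>lborel) / (\<integral>y. Lfun Q lam dl I y \<partial>lborel)) at_top"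
    using pos by (intro tendsto_divide T1 T0) simp
  also have "(\<integral>y. y$k * Lfun Q lam dl I y \<partial>lborel) / (\<integral>y. Lfun Q lam dl I y \<partial>lborel) = 1/lam$k"
    using pos unfolding r1 by simp
  finally show "((\<lambda>u. (\<integral>y. y$k * hfun Q lam dl I u y \<partial>lborel) / (\<integral>y. hfun Q lam dl I u y \<partial>lborel)) \<longlongrightarrow> 1/lam$k) at_top" .
  show "\<forall>\<^sub>F u in at_top. 0 < (\<integral>y. hfun Q lam dl I u y \<partial>lborel)"
    by (rule order_tendstoD(1)[OF T0 pos])
qed

lemma connect:
  fixes M :: "'a measure" and X :: "'a \<Rightarrow> real^'d::finite" and S :: "real^'d^'d"
    and c ct lam :: "real^'d" and I :: "'d set" and k :: 'd and u :: real
  assumes P: "prob_space M"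
    and D0: "distributed M lborel X (gauss_density S)"
    and Qsym: "transpose (matrix_inv S) = matrix_inv S"
    and Qct: "matrix_inv S *v ct = lam"
    and lamO: "\<And>j. j \<notin> I \<Longrightarrow> lam$j = 0"
    and ctI: "\<And>i. i\<in>I \<Longrightarrow> ct$i = c$i"
    and kI: "k \<in> I" and u: "u > 0"
    and int0: "integrable lborel (hfun (matrix_inv S) lam (ct - c) I u)"
    and int1: "integrable lborel (\<lambda>y. y$k * hfun (matrix_inv S) lam (ct - c) I u y)"
    and pos: "(\<integral>y. hfun (matrix_inv S) lam (ct - c) I u y \<partial>lborel) > 0"
  shows "u * (cond_mean M X k c u - c $ k * u) =
     (\<integral>y. y$k * hfun (matrix_inv S) lam (ct - c) I u y \<partial>lborel) / (\<integral>y. hfun (matrix_inv S) lam (ct - c) I u y \<partial>lborel)"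
proof -
  define Q where "Q = matrix_inv S"
  define dl where "dl = ct - c"
  define sd where "sd = sqrt ((2 * pi) ^ CARD('d) * det S)"
  define g where "g x = exp (- (x \<bullet> (Q *v x)) / 2) / sd" for x :: "real^'d"
  have gm[measurable]: "g \<in> borel_measurable borel"
    unfolding g_def[abs_def] qf_expand by measurable
  have D: "distributed M lborel X (\<lambda>x. ennreal (g x))"
    using D0 unfolding gauss_density_def g_def Q_def sd_def by simp
  interpret prob_space M by (rule P)
  have sdpos: "sd > 0"
  proof (rule ccontr)
    assume "\<not> sd > 0"
    then have "g x \<le> 0" for x unfolding g_def by (simp add: divide_nonneg_nonpos)
    then have "{x \<in> space lborel. ennreal (g x) \<noteq> 0} = {}" by (auto simp: ennreal_eq_0_iff)
    then show False using distributed_imp_emeasure_nonzero[OF D] by simp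
  qed
  have g0: "0 \<le> g x" for x using sdpos by (simp add: g_def)
  define Reg where "Reg = {x::real^'d. \<forall>i. c$i*u < x$i}"
  have Regm[measurable]: "Reg \<in> sets borel" unfolding Reg_def by measurable
  define A where "A = {\<omega> \<in> space M. \<forall>i. X \<omega> $ i > c $ i * u}"
  have Xm[measurable]: "X \<in> measurable M borel" using distributed_measurable[OF D] by simp
  have AX: "A = X -` Reg \<inter> space M" by (auto simp: A_def Reg_def)
  have Num: "(\<integral>\<omega>. X \<omega> $ k * indicator A \<omega> \<partial>M) = (\<integral>x. g x * (x$k * indicator Reg x) \<partial>lborel)"
  proof -
    have "(\<integral>\<omega>. X \<omega> $ k * indicator A \<omega> \<partial>M) = (\<integral>\<omega>. (\<lambda>x. x$k * indicator Reg x) (X \<omega>) \<partial>M)"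
      by (rule Bochner_Integration.integral_cong) (auto simp: AX indicator_def)
    also have "\<dots> = (\<integral>x. g x * (x$k * indicator Reg x) \<partial>lborel)"
      by (rule distributed_integral[OF D, symmetric]) (auto simp: g0)
    finally show ?thesis .
  qed
  have Den: "measure M A = (\<integral>x. g x * indicator Reg x \<partial>lborel)"
  proof -
    have "measure M A = (\<integral>\<omega>. indicator A \<omega> \<partial>M)"
      by (simp add: A_def Int_absorb2)
    also have "\<dots> = (\<integral>\<omega>. (\<lambda>x. indicator Reg x) (X \<omega>) \<partial>M)"
      by (rule Bochner_Integration.integral_cong) (auto simp: AX indicator_def)
    also have "\<dots> = (\<integral>x. g x * indicator Reg x \<partial>lborel)"
      by (rule distributed_integral[OF D, symmetric]) (auto simp: g0)
    finally show ?thesis .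
  qed
  define cc where "cc j = (if axis_index j \<in> I then 1/u else 1)" for j :: "real^'d"
  define T where "T y = u *\<^sub>R ct + (\<Sum>j\<in>Basis. (cc j * (y \<bullet> j)) *\<^sub>R j)" for y :: "real^'d"
  define J where "J = (\<Prod>j\<in>(Basis::(real^'d) set). \<bar>cc j\<bar>)"
  have Tm[measurable]: "T \<in> borel_measurable borel" unfolding T_def[abs_def] by measurable
  have lbT: "(lborel :: (real^'d) measure) = density (distr lborel borel T) (\<lambda>_. ennreal J)"
    unfolding T_def[abs_def] J_def
    by (rule lborel_affine_euclidean) (use u in \<open>auto simp: cc_def\<close>)
  have J0: "J \<ge> 0" unfolding J_def by (simp add: prod_nonneg)
  have cov: "(\<integral>x. F x \<partial>lborel) = J * (\<integral>y. F (T y) \<partial>lborel)" if [measurable]: "F \<in> borel_measurable borel" for F :: "real^'d \<Rightarrow> real"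
  proof -
    have "(\<integral>x. F x \<partial>lborel) = (\<integral>x. F x \<partial>(density (distr lborel borel T) (\<lambda>_. ennreal J)))"
      by (rule arg_cong[where f="\<lambda>M. integral\<^sup>L M F", OF lbT])
    also have "\<dots> = (\<integral>x. J *\<^sub>R F x \<partial>(distr lborel borel T))"
      by (rule integral_density) (auto simp: J0)
    also have "\<dots> = (\<integral>y. J *\<^sub>R F (T y) \<partial>lborel)"
      by (rule integral_distr) auto
    finally show ?thesis by simp
  qed
  have TD: "T y = u *\<^sub>R ct + Dsc I u y" for y
  proof (subst vec_eq_iff, rule allI)
    fix i
    have "(\<Sum>j\<in>Basis. (cc j * (y \<bullet> j)) *\<^sub>R j :: real^'d) $ i = cc (axis i 1) * (y \<bullet> axis i 1)"
      using vec_basis_sum_nth[of Basis "\<lambda>j. cc j * (y \<bullet> j)" i] by simp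
    then show "T y $ i = (u *\<^sub>R ct + Dsc I u y) $ i"
      by (simp add: T_def Dsc_def cc_def inner_axis)
  qed
  define E where "E = exp (-(u^2 * (ct \<bullet> (Q *v ct)))/2)"
  have key: "g (T y) * indicator Reg (T y) = (E / sd) * hfun Q lam dl I u y" for y
  proof -
    let ?D = "Dsc I u y"
    have Dl: "?D \<bullet> lam = (lam \<bullet> y) / u"
      unfolding inner_expand sum_divide_distrib by (intro sum.cong) (auto simp: Dsc_def lamO)
    have sy: "ct \<bullet> (Q *v ?D) = ?D \<bullet> (Q *v ct)" using dot_sym[OF Qsym[folded Q_def]] by blast
    have qq: "(u *\<^sub>R ct + ?D) \<bullet> (Q *v (u *\<^sub>R ct + ?D)) =
       u^2 * (ct \<bullet> (Q *v ct)) + 2 * (lam \<bullet> y) + ?D \<bullet> (Q *v ?D)"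
      using u Qct[folded Q_def] sy Dl
      by (simp add: matrix_vector_right_distrib matrix_vector_mult_scaleR inner_add_left inner_add_right
          power2_eq_square algebra_simps)
    have ex: "g (T y) = (E / sd) * exp (-(lam \<bullet> y) - (?D \<bullet> (Q *v ?D))/2)"
      unfolding g_def TD qq E_def by (simp add: exp_add[symmetric] field_simps)
    have ind: "(T y \<in> Reg) = (y \<in> {y. \<forall>i. (if i\<in>I then 0 else -(dl$i*u)) < y$i})"
    proof -
      have "(c$i*u < (T y)$i) = ((if i\<in>I then 0 else -(dl$i*u)) < y$i)" for i
      proof (cases "i \<in> I")
        case True
        then show ?thesis using u ctI[OF True] by (simp add: TD Dsc_def field_simps)
      next
        case False
        then show ?thesis by (simp add: TD Dsc_def dl_def algebra_simps)
      qed
      then show ?thesis by (simp add: Reg_def)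
    qed
    show ?thesis unfolding ex hfun_def using ind by (simp add: indicator_def)
  qed
  have Tk: "T y $ k = u * c$k + y$k / u" for y using kI ctI[OF kI] by (simp add: TD Dsc_def)
  define Ih where "Ih = (\<integral>y. hfun Q lam dl I u y \<partial>lborel)"
  define Iy where "Iy = (\<integral>y. y$k * hfun Q lam dl I u y \<partial>lborel)"
  have Ihpos: "Ih > 0" using pos by (simp add: Ih_def Q_def dl_def)
  have Den2: "measure M A = J * (E/sd) * Ih"
  proof -
    have "measure M A = J * (\<integral>y. g (T y) * indicator Reg (T y) \<partial>lborel)"
      unfolding Den by (rule cov) measurable
    also have "\<dots> = J * (\<integral>y. (E / sd) * hfun Q lam dl I u y \<partial>lborel)" by (simp add: key)
    finally show ?thesis by (simp add: Ih_def)
  qed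
  have Num2: "(\<integral>\<omega>. X \<omega> $ k * indicator A \<omega> \<partial>M) = J * (E/sd) * (u * c$k * Ih + Iy / u)"
  proof -
    have "(\<integral>\<omega>. X \<omega> $ k * indicator A \<omega> \<partial>M) = J * (\<integral>y. g (T y) * ((T y)$k * indicator Reg (T y)) \<partial>lborel)"
      unfolding Num by (rule cov) measurable
    also have "\<dots> = J * (\<integral>y. (E / sd) * ((u * c$k) * hfun Q lam dl I u y + (1/u) * (y$k * hfun Q lam dl I u y)) \<partial>lborel)"
      using key by (simp add: Tk algebra_simps)
    also have "(\<integral>y. (E / sd) * ((u * c$k) * hfun Q lam dl I u y + (1/u) * (y$k * hfun Q lam dl I u y)) \<partial>lborel)
        = (E / sd) * ((u * c$k) * Ih + (1/u) * Iy)"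
      using int0 int1 unfolding Ih_def Iy_def Q_def dl_def by simp
    finally show ?thesis by simp
  qed
  have Jpos: "J > 0" unfolding J_def using u by (intro prod_pos) (auto simp: cc_def)
  have Epos: "E > 0" by (simp add: E_def)
  have cm: "cond_mean M X k c u = (u * c$k * Ih + Iy / u) / Ih"
    unfolding cond_mean_def Let_def A_def[symmetric] Num2 Den2
    using Jpos Epos sdpos Ihpos by (simp add: field_simps)
  show ?thesis
    unfolding cm using u Ihpos by (simp add: field_simps Ih_def Iy_def Q_def dl_def)
qed

theorem mainTheorem8:
  fixes M :: "'a measure" and X :: "'a \<Rightarrow> real^'d" and S :: "real^'d^'d"
    and c :: "real^'d" and I :: "'d set" and k :: 'd
  assumes "prob_space M"
    and "transpose S = S"
    and "\<forall>x. 0 \<le> x \<bullet> (S *v x)"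
    and "invertible S"
    and "distributed M lborel X (gauss_density S)"
    and "\<exists>i. c $ i > 0"
    and "assoc_index_set S c I"
    and "k \<in> I"
  shows "((\<lambda>u. u * (cond_mean M X k c u - c $ k * u)) \<longlongrightarrow>
            1 / (\<Sum>i\<in>I. c $ i * sub_inv S I $ i $ k)) at_top
         \<and> 1 / (\<Sum>i\<in>I. c $ i * sub_inv S I $ i $ k) > 0"
proof -
  note P = assms(1) and sym = assms(2) and psd = assms(3) and inv = assms(4) and D0 = assms(5)
    and kI = assms(8)
  obtain ct where ctI: "\<forall>i\<in>I. ct $ i = c $ i"
    and lpos: "\<forall>i\<in>I. (\<Sum>j\<in>I. sub_inv S I $ i $ j * c $ j) > 0"
    and ctO: "\<forall>j. j \<notin> I \<longrightarrow>
            ct $ j = (\<Sum>i\<in>I. S $ j $ i * (\<Sum>l\<in>I. sub_inv S I $ i $ l * c $ l)) \<and> ct $ j \<ge> c $ j"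
    using assms(7) unfolding assoc_index_set_def by blast
  define lam where "lam = (\<chi> i. if i \<in> I then (\<Sum>l\<in>I. sub_inv S I $ i $ l * c $ l) else 0)"
  have ctO': "\<forall>j. j \<notin> I \<longrightarrow> ct $ j = (\<Sum>i\<in>I. S $ j $ i * (\<Sum>l\<in>I. sub_inv S I $ i $ l * c $ l))"
    using ctO by blast
  have Qct: "matrix_inv S *v ct = lam"
    and sumk: "(\<Sum>i\<in>I. c $ i * sub_inv S I $ i $ k) = lam $ k"
    using lam_facts[OF sym psd inv ctI ctO'] kI unfolding lam_def by auto
  have lamI: "\<And>i. i\<in>I \<Longrightarrow> lam$i > 0" using lpos by (simp add: lam_def)
  have lamO: "\<And>j. j \<notin> I \<Longrightarrow> lam$j = 0" by (simp add: lam_def)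
  have Qsym: "transpose (matrix_inv S) = matrix_inv S" by (rule Q_facts(1)[OF sym psd inv])
  obtain m where m: "m > 0" and Qm: "\<And>v. m * (v \<bullet> v) \<le> v \<bullet> (matrix_inv S *v v)"
    using Q_facts(2)[OF sym psd inv] by blast
  define dl where "dl = ct - c"
  have dl: "\<And>j. j \<notin> I \<Longrightarrow> dl$j \<ge> 0"
  proof -
    fix j assume "j \<notin> I"
    then have "ct $ j \<ge> c $ j" using ctO by blast
    then show "dl$j \<ge> 0" by (simp add: dl_def)
  qed
  have cr1: "((\<lambda>u. (\<integral>y. y$k * hfun (matrix_inv S) lam dl I u y \<partial>lborel) / (\<integral>y. hfun (matrix_inv S) lam dl I u y \<partial>lborel)) \<longlongrightarrow> 1/lam$k) at_top"
    by (rule core(1)[where m=m]) (use m Qm lamI lamO dl kI in auto)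
  have cr2: "\<forall>\<^sub>F u in at_top. 0 < (\<integral>y. hfun (matrix_inv S) lam dl I u y \<partial>lborel)"
    by (rule core(2)[where m=m]) (use m Qm lamI lamO dl kI in auto)
  have Hint: "integrable lborel (Hfun lam m I)" by (rule Hfun_integrable[OF m lamI])
  have H0: "0 \<le> Hfun lam m I y" for y unfolding Hfun_def by (intro prod_nonneg) (simp add: phi_nonneg)
  have int0: "integrable lborel (hfun (matrix_inv S) lam (ct - c) I u)" for u
    using Hint
  proof (rule Bochner_Integration.integrable_bound)
    show "AE y in lborel. norm (hfun (matrix_inv S) lam (ct - c) I u y) \<le> norm (Hfun lam m I y)"
      using hfun_bound[OF m Qm lamO kI] H0 by simp
  qed simp
  have int1: "integrable lborel (\<lambda>y. y$k * hfun (matrix_inv S) lam (ct - c) I u y)" for u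
    using Hint
  proof (rule Bochner_Integration.integrable_bound)
    show "AE y in lborel. norm (y$k * hfun (matrix_inv S) lam (ct - c) I u y) \<le> norm (Hfun lam m I y)"
    proof -
      have "norm (y$k * hfun (matrix_inv S) lam (ct - c) I u y) \<le> norm (Hfun lam m I y)" for y
        using hfun_bound[OF m Qm lamO kI, of "ct - c" u y] H0[of y] unfolding real_norm_def by linarith
      then show ?thesis by simp
    qed
  qed simp
  have ev: "\<forall>\<^sub>F u in at_top. (\<integral>y. y$k * hfun (matrix_inv S) lam dl I u y \<partial>lborel) / (\<integral>y. hfun (matrix_inv S) lam dl I u y \<partial>lborel)
       = u * (cond_mean M X k c u - c $ k * u)"
    using cr2 eventually_gt_at_top[of 0]
  proof eventually_elim
    case (elim u)
    show ?case
      unfolding dl_def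
      by (rule connect[OF P D0 Qsym Qct lamO _ kI elim(2) int0 int1 elim(1)[unfolded dl_def], symmetric])
         (use ctI in auto)
  qed
  have "((\<lambda>u. u * (cond_mean M X k c u - c $ k * u)) \<longlongrightarrow> 1 / lam$k) at_top"
    using tendsto_cong[OF ev] cr1 by blast
  moreover have "1 / lam$k > 0" using lamI[OF kI] by simp
  ultimately show ?thesis unfolding sumk by blast
qed

end
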